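(* Let $\lambda\in P$, $\lhd\in\mathrm{RO}(\lambda,\Delta^+)$ and $w\in W$. For every $A\in\mathcal{A}(w,\Gamma)$ one has $\mathrm{wt}(A)=\mathrm{wt}(\Xi(A))$.
   Context: Let $\mathfrak{g}$ be a finite-dimensional complex simple Lie algebra with root system $\Delta$, positive roots $\Delta^+$, Weyl group $W$ with length function $\ell$ and reflections $s_\alpha$, weight lattice $P$, $\mathfrak{h}^*_{\mathbb{R}}=P\otimes_{\mathbb{Z}}\mathbb{R}$, pairing $\langle\cdot,\cdot\rangle$, $\alpha^\vee$ the coroot of $\alpha$, $\rho=\frac12\sum_{\alpha\in\Delta^+}\alpha$. For $\alpha\in\Delta$, $\operatorname{sgn}(\alpha)=\pm1$ according as $\alpha\in\pm\Delta^+$, and $|\alpha|=\operatorname{sgn}(\alpha)\alpha$. For $\alpha\in\Delta$, $k\in\mathbb{Z}$, the affine reflection $s_{\alpha,k}$ of $\mathfrak{h}^*_{\mathbb{R}}$ is $s_{\alpha,k}(\nu)=\nu-(\langle\nu,\alpha^\vee\rangle-k)\alpha$. For $\lambda\in P$, $\Delta^+(\lambda)_{>0}$, $\Delta^+(\lambda)_{=0}$, $\Delta^+(\lambda)_{<0}$ are the sets of $\alpha\in\Delta^+$ with $\langle\lambda,\alpha^\vee\rangle>0$, $=0$, $<0$. Quantum Bruhat graph $\mathrm{QBG}(W)$: vertices $W$; an edge $x\xrightarrow{\alpha}y$ ($\alpha\in\Delta^+$) whenever $y=xs_\alpha$ and either $\ell(y)=\ell(x)+1$ (Bruhat edge) or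 $\ell(y)=\ell(x)-2\langle\rho,\alpha^\vee\rangle+1$ (quantum edge). Reflection orders: a total order $\lhd$ on $\Delta^+$ is a reflection order if whenever $\alpha,\beta,\alpha+\beta\in\Delta^+$, either $\alpha\lhd\alpha+\beta\lhd\beta$ or $\beta\lhd\alpha+\beta\lhd\alpha$; $\mathrm{RO}(\lambda,\Delta^+)$ is the set of those with $\alpha\lhd\beta\lhd\gamma$ for $\alpha\in\Delta^+(\lambda)_{<0}$, $\beta\in\Delta^+(\lambda)_{=0}$, $\gamma\in\Delta^+(\lambda)_{>0}$. Fix such $\lhd$. Interpolated QLS paths: for $x,y\in W$, $\sigma\in\mathbb{Q}$, write $x\overset{(\lambda,+)}{\Longrightarrow}_\sigma y$ if there is a directed path $x=x_0\xrightarrow{\gamma_1}x_1\to\cdots\xrightarrow{\gamma_r}x_r=y$ in $\mathrm{QBG}(W)$ ($r\ge0$) with all $\gamma_k\in\Delta^+(\lambda)_{>0}$, $\gamma_{k+1}\lhd\gamma_k$ for all $k$, and $\sigma\langle\lambda,\gamma_k^\vee\rangle\in\mathbb{Z}$ for all $k$; $x\overset{(\lambda,-)}{\Longrightarrow}_\sigma y$ is defined identically with $\Delta^+(\lambda)_{<0}$ in place of $\Delta^+(\lambda)_{>0}$. An interpolated QLS path of shape $\lambda$ is a triple $\eta=(x_1,\dots,x_s;y_1,\dots,y_{s-1};\sigma_0,\dots,\sigma_s)$ ($s\ge1$) with $x_i,y_i\in W$, $x_i\ne x_{i+1}$, $y_i\ne y_{i+1}$, $\sigma_i\in\mathbb{Q}$,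 $0=\sigma_0<\sigma_1<\dots<\sigma_s=1$, and for $1\le i\le s-1$: $x_{i+1}\overset{(\lambda,-)}{\Longrightarrow}_{\sigma_i}y_i$ and $y_i\overset{(\lambda,+)}{\Longrightarrow}_{\sigma_i}x_i$. $\mathrm{IQLS}(\lambda)$ is the set of these; its weight is $\mathrm{wt}(\eta):=\sum_{k=1}^s(\sigma_k-\sigma_{k-1})x_k\lambda$. Affine data: real affine coroots $\gamma^\vee+k\tilde\delta$ ($\gamma\in\Delta$, $k\in\mathbb{Z}$, $\tilde\delta$ formal); for $\beta^\vee=\gamma^\vee+k\tilde\delta$ put $\overline{\beta^\vee}=\gamma^\vee$, $\overline\beta=\gamma$, $\deg(\beta^\vee)=k$; it is positive if $k>0$ or ($k=0$, $\gamma\in\Delta^+$), negative otherwise; $t_\lambda(\gamma^\vee+k\tilde\delta)=\gamma^\vee+(k-\langle\lambda,\gamma^\vee\rangle)\tilde\delta$; $\mathrm{Inv}(\lambda)$ is the set of positive real affine coroots $\beta^\vee$ with $t_\lambda(\beta^\vee)$ negative (for these, $\langle\lambda,\overline{\beta^\vee}\rangle>0$ and $\overline\beta\in\Delta^+(\lambda)_{>0}\sqcup(-\Delta^+(\lambda)_{<0})$); put $d(\beta^\vee)=\deg(\beta^\vee)/\langle\lambda,\overline{\beta^\vee}\rangle$. Order $\prec$ on $\Delta^+(\lambda)_{>0}\sqcup(-\Delta^+(\lambda)_{<0})$: elements of $\Delta^+(\lambda)_{>0}$ precede those of $-\Delta^+(\lambda)_{<0}$; $\gamma\prec\gamma'$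 iff $\gamma\lhd\gamma'$ on $\Delta^+(\lambda)_{>0}$; $-\alpha\prec-\alpha'$ iff $\alpha\lhd\alpha'$ on $-\Delta^+(\lambda)_{<0}$. Order $<$ on $\mathrm{Inv}(\lambda)$: $\beta^\vee<\beta'^\vee$ iff $d(\beta^\vee)<d(\beta'^\vee)$, or they are equal and $\overline{\beta'}\prec\overline\beta$. Write $\mathrm{Inv}(\lambda)=\{\beta_1^\vee<\dots<\beta_r^\vee\}$, $\gamma_k:=\overline{\beta_k}$, $d_k:=d(\beta_k^\vee)$, $l_k:=\deg(\beta_k^\vee)$, and $\Gamma:=(\gamma_1,\dots,\gamma_r)$. Admissible subsets: for $w\in W$, $\mathcal{A}(w,\Gamma)$ is the set of $A=\{j_1<\dots<j_p\}\subseteq\{1,\dots,r\}$ such that $w=u_0\xrightarrow{|\gamma_{j_1}|}u_1\to\cdots\xrightarrow{|\gamma_{j_p}|}u_p$ is a directed path in $\mathrm{QBG}(W)$, where $u_a:=ws_{|\gamma_{j_1}|}\cdots s_{|\gamma_{j_a}|}$; its weight is $\mathrm{wt}(A):=-w\,s_{\gamma_{j_1},-l_{j_1}}\cdots s_{\gamma_{j_p},-l_{j_p}}(-\lambda)$. One has $0\le d_{j_1}\le\dots\le d_{j_p}\le1$. The map $\Xi$: let $0<c_1<\dots<c_{t-1}<1$ ($t\ge1$) be the distinct values among $d_{j_1},\dots,d_{j_p}$ lying strictly between $0$ and $1$; put $c_0:=0$, $c_t:=1$. For $1\le a\le t$ let $m_a:=\#\{b\mid d_{j_b}<c_a\}$;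 for $1\le a\le t-1$ let $n_a:=m_a+\#\{b\mid m_a<b\le m_{a+1},\ \gamma_{j_b}\in-\Delta^+\}$. Then $\Xi(A):=(x_1,\dots,x_t;y_1,\dots,y_{t-1};\sigma_0,\dots,\sigma_t)$ with $x_i:=u_{m_{t+1-i}}$, $y_i:=u_{n_{t-i}}$, $\sigma_i:=1-c_{t-i}$; this lies in $\mathrm{IQLS}(\lambda)$. *)

theory Defs
  imports "HOL-Analysis.Analysis"
begin

text \<open>The real form h*_R is modelled by a Euclidean space 'a whose inner product
  is W-invariant; roots are vectors of 'a.\<close>

definition coroot_pair :: "'a::real_inner \<Rightarrow> 'a \<Rightarrow> real" where
  "coroot_pair \<nu> \<alpha> = 2 * inner \<nu> \<alpha> / inner \<alpha> \<alpha>"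

definition refl :: "'a::real_inner \<Rightarrow> 'a \<Rightarrow> 'a" where
  "refl \<alpha> \<nu> = \<nu> - coroot_pair \<nu> \<alpha> *\<^sub>R \<alpha>"

definition aff_refl :: "'a::real_inner \<Rightarrow> int \<Rightarrow> 'a \<Rightarrow> 'a" where
  "aff_refl \<alpha> k \<nu> = \<nu> - (coroot_pair \<nu> \<alpha> - of_int k) *\<^sub>R \<alpha>"

definition root_system :: "'a::euclidean_space set \<Rightarrow> bool" where
  "root_system \<Delta> \<longleftrightarrow> finite \<Delta> \<and> 0 \<notin> \<Delta> \<and> span \<Delta> = UNIV
     \<and> (\<forall>\<alpha>\<in>\<Delta>. refl \<alpha> ` \<Delta> \<subseteq> \<Delta>)
     \<and> (\<forall>\<alpha>\<in>\<Delta>. \<forall>\<beta>\<in>\<Delta>. coroot_pair \<beta> \<alpha> \<in> \<int>)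
     \<and> (\<forall>\<alpha>\<in>\<Delta>. \<forall>c. c *\<^sub>R \<alpha> \<in> \<Delta> \<longrightarrow> c = 1 \<or> c = -1)"

definition irreducible_rs :: "'a::real_inner set \<Rightarrow> bool" where
  "irreducible_rs \<Delta> \<longleftrightarrow> \<Delta> \<noteq> {} \<and>
     \<not> (\<exists>A B. A \<noteq> {} \<and> B \<noteq> {} \<and> A \<union> B = \<Delta> \<and> A \<inter> B = {}
            \<and> (\<forall>a\<in>A. \<forall>b\<in>B. inner a b = 0))"

definition positive_system :: "'a::real_inner set \<Rightarrow> 'a set \<Rightarrow> bool" where
  "positive_system \<Delta> \<Delta>p \<longleftrightarrow>
     (\<exists>f. (\<forall>\<alpha>\<in>\<Delta>. inner f \<alpha> \<noteq> 0) \<and> \<Delta>p = {\<alpha>\<in>\<Delta>. inner f \<alpha> > 0})"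

inductive_set weyl_group :: "'a::real_inner set \<Rightarrow> ('a \<Rightarrow> 'a) set" for \<Delta> where
  id_in: "id \<in> weyl_group \<Delta>"
| refl_in: "w \<in> weyl_group \<Delta> \<Longrightarrow> \<alpha> \<in> \<Delta> \<Longrightarrow> w \<circ> refl \<alpha> \<in> weyl_group \<Delta>"

definition simple_roots :: "'a::real_inner set \<Rightarrow> 'a set" where
  "simple_roots \<Delta>p = {\<alpha>\<in>\<Delta>p. \<not> (\<exists>\<beta>\<in>\<Delta>p. \<exists>\<gamma>\<in>\<Delta>p. \<alpha> = \<beta> + \<gamma>)}"

definition weyl_length :: "'a::real_inner set \<Rightarrow> ('a \<Rightarrow> 'a) \<Rightarrow> nat" where
  "weyl_length \<Delta>p w = (LEAST n. \<exists>als. length als = n \<and> set als \<subseteq> simple_roots \<Delta>p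
        \<and> w = foldr (\<lambda>\<alpha> f. refl \<alpha> \<circ> f) als id)"

definition rho :: "'a::real_inner set \<Rightarrow> 'a" where
  "rho \<Delta>p = (1/2) *\<^sub>R (\<Sum>\<alpha>\<in>\<Delta>p. \<alpha>)"

definition qbg_edge :: "'a::real_inner set \<Rightarrow> ('a \<Rightarrow> 'a) \<Rightarrow> 'a \<Rightarrow> ('a \<Rightarrow> 'a) \<Rightarrow> bool" where
  "qbg_edge \<Delta>p x \<alpha> y \<longleftrightarrow> \<alpha> \<in> \<Delta>p \<and> y = x \<circ> refl \<alpha> \<and>
     (real (weyl_length \<Delta>p y) = real (weyl_length \<Delta>p x) + 1 \<or>
      real (weyl_length \<Delta>p y) = real (weyl_length \<Delta>p x) - 2 * coroot_pair (rho \<Delta>p) \<alpha> + 1)"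

definition weight_lattice :: "'a::real_inner set \<Rightarrow> 'a set" where
  "weight_lattice \<Delta> = {\<mu>. \<forall>\<alpha>\<in>\<Delta>. coroot_pair \<mu> \<alpha> \<in> \<int>}"

definition pos_part :: "'a::real_inner set \<Rightarrow> 'a \<Rightarrow> 'a set" where
  "pos_part \<Delta>p \<mu> = {\<alpha>\<in>\<Delta>p. coroot_pair \<mu> \<alpha> > 0}"
definition zero_part :: "'a::real_inner set \<Rightarrow> 'a \<Rightarrow> 'a set" where
  "zero_part \<Delta>p \<mu> = {\<alpha>\<in>\<Delta>p. coroot_pair \<mu> \<alpha> = 0}"
definition neg_part :: "'a::real_inner set \<Rightarrow> 'a \<Rightarrow> 'a set" where
  "neg_part \<Delta>p \<mu> = {\<alpha>\<in>\<Delta>p. coroot_pair \<mu> \<alpha> < 0}"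

text \<open>A reflection order: a strict total order R on the positive roots (R a b means a \<lhd> b).\<close>
definition reflection_order :: "'a::real_inner set \<Rightarrow> ('a \<Rightarrow> 'a \<Rightarrow> bool) \<Rightarrow> bool" where
  "reflection_order \<Delta>p R \<longleftrightarrow>
     (\<forall>\<alpha>\<in>\<Delta>p. \<not> R \<alpha> \<alpha>) \<and>
     (\<forall>\<alpha>\<in>\<Delta>p. \<forall>\<beta>\<in>\<Delta>p. \<forall>\<gamma>\<in>\<Delta>p. R \<alpha> \<beta> \<longrightarrow> R \<beta> \<gamma> \<longrightarrow> R \<alpha> \<gamma>) \<and>
     (\<forall>\<alpha>\<in>\<Delta>p. \<forall>\<beta>\<in>\<Delta>p. \<alpha> \<noteq> \<beta> \<longrightarrow> R \<alpha> \<beta> \<or> R \<beta> \<alpha>) \<and>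
     (\<forall>\<alpha>\<in>\<Delta>p. \<forall>\<beta>\<in>\<Delta>p. \<alpha> + \<beta> \<in> \<Delta>p \<longrightarrow>
        (R \<alpha> (\<alpha> + \<beta>) \<and> R (\<alpha> + \<beta>) \<beta>) \<or> (R \<beta> (\<alpha> + \<beta>) \<and> R (\<alpha> + \<beta>) \<alpha>))"

definition RO :: "'a::real_inner \<Rightarrow> 'a set \<Rightarrow> ('a \<Rightarrow> 'a \<Rightarrow> bool) set" where
  "RO \<mu> \<Delta>p = {R. reflection_order \<Delta>p R \<and>
     (\<forall>\<alpha>\<in>neg_part \<Delta>p \<mu>. \<forall>\<beta>\<in>zero_part \<Delta>p \<mu>. R \<alpha> \<beta>) \<and>
     (\<forall>\<beta>\<in>zero_part \<Delta>p \<mu>. \<forall>\<gamma>\<in>pos_part \<Delta>p \<mu>. R \<beta> \<gamma>) \<and>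
     (\<forall>\<alpha>\<in>neg_part \<Delta>p \<mu>. \<forall>\<gamma>\<in>pos_part \<Delta>p \<mu>. R \<alpha> \<gamma>)}"

text \<open>A real affine coroot gamma^vee + k delta is represented by the pair (gamma, k).
  Positivity of gamma^vee + k delta (degree given as a real number).\<close>
definition aff_pos :: "'a set \<Rightarrow> 'a \<Rightarrow> real \<Rightarrow> bool" where
  "aff_pos \<Delta>p \<gamma> k \<longleftrightarrow> k > 0 \<or> (k = 0 \<and> \<gamma> \<in> \<Delta>p)"

text \<open>Inv(lambda): positive beta with t_lambda(beta) negative;
  t_lambda(gamma^vee + k delta) = gamma^vee + (k - <lambda,gamma^vee>) delta.\<close>
definition Inv :: "'a::real_inner set \<Rightarrow> 'a set \<Rightarrow> 'a \<Rightarrow> ('a \<times> int) set" where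
  "Inv \<Delta> \<Delta>p \<mu> = {(\<gamma>, k). \<gamma> \<in> \<Delta> \<and> aff_pos \<Delta>p \<gamma> (of_int k)
       \<and> \<not> aff_pos \<Delta>p \<gamma> (of_int k - coroot_pair \<mu> \<gamma>)}"

definition dval :: "'a::real_inner \<Rightarrow> 'a \<times> int \<Rightarrow> real" where
  "dval \<mu> b = of_int (snd b) / coroot_pair \<mu> (fst b)"

definition prec :: "'a::real_inner set \<Rightarrow> ('a \<Rightarrow> 'a \<Rightarrow> bool) \<Rightarrow> 'a \<Rightarrow> 'a \<Rightarrow> bool" where
  "prec \<Delta>p R \<gamma> \<gamma>' \<longleftrightarrow> (\<gamma> \<in> \<Delta>p \<and> \<gamma>' \<notin> \<Delta>p) \<or> (\<gamma> \<in> \<Delta>p \<and> \<gamma>' \<in> \<Delta>p \<and> R \<gamma> \<gamma>')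
      \<or> (\<gamma> \<notin> \<Delta>p \<and> \<gamma>' \<notin> \<Delta>p \<and> R (-\<gamma>) (-\<gamma>'))"

definition inv_less :: "'a::real_inner set \<Rightarrow> ('a \<Rightarrow> 'a \<Rightarrow> bool) \<Rightarrow> 'a \<Rightarrow> 'a \<times> int \<Rightarrow> 'a \<times> int \<Rightarrow> bool" where
  "inv_less \<Delta>p R \<mu> b b' \<longleftrightarrow> dval \<mu> b < dval \<mu> b' \<or>
     (dval \<mu> b = dval \<mu> b' \<and> prec \<Delta>p R (fst b') (fst b))"

text \<open>Inv(lambda) = {beta_1 < ... < beta_r} as a list; gamma_k = fst, l_k = snd.\<close>
definition inv_list :: "'a::real_inner set \<Rightarrow> 'a set \<Rightarrow> ('a \<Rightarrow> 'a \<Rightarrow> bool) \<Rightarrow> 'a \<Rightarrow> ('a \<times> int) list" where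
  "inv_list \<Delta> \<Delta>p R \<mu> = (THE L. distinct L \<and> set L = Inv \<Delta> \<Delta>p \<mu> \<and> sorted_wrt (inv_less \<Delta>p R \<mu>) L)"

definition absr :: "'a::real_inner set \<Rightarrow> 'a \<Rightarrow> 'a" where
  "absr \<Delta>p \<gamma> = (if \<gamma> \<in> \<Delta>p then \<gamma> else - \<gamma>)"

text \<open>u_a = w s_{|gamma_{j_1}|} ... s_{|gamma_{j_a}|}, indices of Gamma are 1-based\<close>
definition u_seq :: "'a::real_inner set \<Rightarrow> ('a \<times> int) list \<Rightarrow> ('a \<Rightarrow> 'a) \<Rightarrow> nat list \<Rightarrow> nat \<Rightarrow> 'a \<Rightarrow> 'a" where
  "u_seq \<Delta>p L w js a = w \<circ> foldr (\<lambda>j f. refl (absr \<Delta>p (fst (L ! (j - 1)))) \<circ> f) (take a js) id"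

definition admissible :: "'a::euclidean_space set \<Rightarrow> 'a set \<Rightarrow> ('a \<Rightarrow> 'a \<Rightarrow> bool) \<Rightarrow> 'a
     \<Rightarrow> ('a \<Rightarrow> 'a) \<Rightarrow> nat set set" where
  "admissible \<Delta> \<Delta>p R \<mu> w =
    {A. let L = inv_list \<Delta> \<Delta>p R \<mu>; js = sorted_list_of_set A in
        A \<subseteq> {1..length L} \<and>
        (\<forall>a < length js. qbg_edge \<Delta>p (u_seq \<Delta>p L w js a)
             (absr \<Delta>p (fst (L ! (js ! a - 1)))) (u_seq \<Delta>p L w js (Suc a)))}"

definition wt_adm :: "'a::euclidean_space set \<Rightarrow> 'a set \<Rightarrow> ('a \<Rightarrow> 'a \<Rightarrow> bool) \<Rightarrow> 'a
     \<Rightarrow> ('a \<Rightarrow> 'a) \<Rightarrow> nat set \<Rightarrow> 'a" where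
  "wt_adm \<Delta> \<Delta>p R \<mu> w A =
    (let L = inv_list \<Delta> \<Delta>p R \<mu>; js = sorted_list_of_set A in
      - w (foldr (\<lambda>j f. aff_refl (fst (L ! (j - 1))) (- snd (L ! (j - 1))) \<circ> f) js id (- \<mu>)))"

text \<open>The map Xi, producing (x_1..x_t; y_1..y_{t-1}; sigma_0..sigma_t) as three lists.\<close>
definition Xi :: "'a::euclidean_space set \<Rightarrow> 'a set \<Rightarrow> ('a \<Rightarrow> 'a \<Rightarrow> bool) \<Rightarrow> 'a
     \<Rightarrow> ('a \<Rightarrow> 'a) \<Rightarrow> nat set \<Rightarrow> ('a \<Rightarrow> 'a) list \<times> ('a \<Rightarrow> 'a) list \<times> real list" where
  "Xi \<Delta> \<Delta>p R \<mu> w A =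
    (let L = inv_list \<Delta> \<Delta>p R \<mu>;
         js = sorted_list_of_set A;
         p = length js;
         u = u_seq \<Delta>p L w js;
         dj = (\<lambda>b. dval \<mu> (L ! (js ! (b - 1) - 1)));
         gj = (\<lambda>b. fst (L ! (js ! (b - 1) - 1)));
         cs = sorted_list_of_set {dj b | b. b \<in> {1..p} \<and> 0 < dj b \<and> dj b < 1};
         t = length cs + 1;
         c = (\<lambda>a. if a = 0 then 0 else if a = t then 1 else cs ! (a - 1));
         m = (\<lambda>a. card {b \<in> {1..p}. dj b < c a});
         n = (\<lambda>a. m a + card {b. m a < b \<and> b \<le> m (Suc a) \<and> gj b \<notin> \<Delta>p})
     in (map (\<lambda>i. u (m (t + 1 - i))) [1..<t + 1],
         map (\<lambda>i. u (n (t - i))) [1..<t],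
         map (\<lambda>i. 1 - c (t - i)) [0..<t + 1]))"

definition wt_path :: "'a::real_vector \<Rightarrow> ('a \<Rightarrow> 'a) list \<times> ('a \<Rightarrow> 'a) list \<times> real list \<Rightarrow> 'a" where
  "wt_path \<mu> \<eta> = (case \<eta> of (xs, ys, \<sigma>s) \<Rightarrow>
     (\<Sum>k = 1..length xs. (\<sigma>s ! k - \<sigma>s ! (k - 1)) *\<^sub>R (xs ! (k - 1)) \<mu>))"

end

theory Submission
  imports Defs
begin


lemma refl_linear: "linear (refl \<alpha>)"
  unfolding refl_def coroot_pair_def
  by (rule linearI) (auto simp: inner_add_left algebra_simps add_divide_distrib)

lemma weyl_linear: "w \<in> weyl_group \<Delta> \<Longrightarrow> linear w"
proof (induction rule: weyl_group.induct)
  case id_in then show ?case by (rule linear_id)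
next
  case (refl_in w \<alpha>) then show ?case by (intro linear_compose[OF refl_linear])
qed

lemma refl_neg: "refl (-\<alpha>) = refl \<alpha>"
  unfolding refl_def coroot_pair_def by (auto simp: fun_eq_iff)

lemma absr_refl: "refl (absr Dp \<gamma>) = refl \<gamma>"
  unfolding absr_def by (simp add: refl_neg)

lemma aff_refl_eq: "aff_refl \<alpha> k \<nu> = refl \<alpha> \<nu> + of_int k *\<^sub>R \<alpha>"
  unfolding aff_refl_def refl_def by (simp add: algebra_simps)

definition rprod :: "(nat \<Rightarrow> 'a::real_inner) \<Rightarrow> nat list \<Rightarrow> 'a \<Rightarrow> 'a" where
  "rprod g js = foldr (\<lambda>j f. refl (g j) \<circ> f) js id"
definition aprod :: "(nat \<Rightarrow> 'a::real_inner) \<Rightarrow> (nat \<Rightarrow> int) \<Rightarrow> nat list \<Rightarrow> 'a \<Rightarrow> 'a" where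
  "aprod g k js = foldr (\<lambda>j f. aff_refl (g j) (k j) \<circ> f) js id"

lemma rprod_Nil[simp]: "rprod g [] x = x" by (simp add: rprod_def)
lemma rprod_Cons[simp]: "rprod g (j#js) x = refl (g j) (rprod g js x)" by (simp add: rprod_def)
lemma aprod_Nil[simp]: "aprod g k [] x = x" by (simp add: aprod_def)
lemma aprod_Cons[simp]: "aprod g k (j#js) x = aff_refl (g j) (k j) (aprod g k js x)" by (simp add: aprod_def)
lemma rprod_append: "rprod g (xs @ ys) x = rprod g xs (rprod g ys x)"
  by (induction xs) auto

lemma rprod_linear: "linear (rprod g js)"
proof (induction js)
  case Nil then show ?case by (simp add: linear_ident rprod_def)
next
  case (Cons j js)
  have "rprod g (j#js) = refl (g j) \<circ> rprod g js" by (simp add: fun_eq_iff)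
  then show ?case using Cons by (simp only:) (intro linear_compose[OF _ refl_linear])
qed

lemma aff_expand:
  "aprod g k js x = rprod g js x +
   (\<Sum>i<length js. of_int (k (js!i)) *\<^sub>R rprod g (take i js) (g (js!i)))"
proof (induction js)
  case Nil then show ?case by simp
next
  case (Cons j js)
  interpret l: linear "refl (g j)" by (rule refl_linear)
  show ?case
    by (simp add: Cons aff_refl_eq sum.lessThan_Suc_shift l.add l.sum l.scale del: sum.lessThan_Suc)
qed



lemma tel: fixes t a0 :: nat assumes "a0 \<le> t" shows "(\<Sum>a=1..t. if a0 < a then f a - f (a-1) else 0) = f t - (f a0 :: real)"
using assms proof (induction t)
  case 0 then show ?case by simp
next
  case (Suc t)
  show ?case
  proof (cases "a0 \<le> t")
    case True
    then show ?thesis using Suc by simp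
  next
    case False
    then have "a0 = Suc t" using Suc by simp
    then show ?thesis by (auto intro!: sum.neutral)
  qed
qed

lemma downclosed:
  fixes D :: "nat \<Rightarrow> real"
  assumes "\<And>i j. i \<le> j \<Longrightarrow> j < p \<Longrightarrow> D i \<le> D j"
  shows "\<exists>q\<le>p. {i. i < p \<and> D i < x} = {..<q}"
  using assms
proof (induction p)
  case 0 then show ?case by auto
next
  case (Suc p)
  then obtain q where q: "q \<le> p" "{i. i < p \<and> D i < x} = {..<q}" by force
  show ?case
  proof (cases "D p < x")
    case True
    have "{i. i < Suc p \<and> D i < x} = {..<Suc p}"
      using True Suc.prems by (auto simp: less_Suc_eq) (metis le_less_trans less_imp_le_nat)
    then show ?thesis by blast
  next
    case False
    have "{i. i < Suc p \<and> D i < x} = {i. i < p \<and> D i < x}"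
      using False by (auto simp: less_Suc_eq)
    then show ?thesis using q by (intro exI[of _ q]) auto
  qed
qed



lemma comb:
  fixes D :: "nat \<Rightarrow> real" and V :: "nat \<Rightarrow> 'a::real_vector"
  assumes srt: "\<And>i j. i \<le> j \<Longrightarrow> j < p \<Longrightarrow> D i \<le> D j"
   and rng: "\<And>i. i < p \<Longrightarrow> 0 \<le> D i \<and> D i \<le> 1"
   and cs: "cs = sorted_list_of_set {D (b-1) | b. b \<in> {1..p} \<and> 0 < D (b-1) \<and> D (b-1) < 1}"
   and t: "t = length cs + 1"
   and c: "c = (\<lambda>a. if a = 0 then 0 else if a = t then 1 else cs ! (a - 1))"
   and m: "m = (\<lambda>a. card {b \<in> {1..p}. D (b-1) < c a})"
  shows "V p + (\<Sum>i<p. D i *\<^sub>R (V i - V (Suc i))) = (\<Sum>a=1..t. (c a - c (a-1)) *\<^sub>R V (m a))"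
proof -
  define S where "S = {D (b-1) | b. b \<in> {1..p} \<and> 0 < D (b-1) \<and> D (b-1) < 1}"
  have finS: "finite S" unfolding S_def by auto
  have setcs: "set cs = S" using cs finS S_def by simp
  have sortcs: "sorted_wrt (<) cs" using cs by simp
  have S01: "x \<in> S \<Longrightarrow> 0 < x \<and> x < 1" for x unfolding S_def by auto
  have cmid: "1 \<le> a \<Longrightarrow> a < t \<Longrightarrow> c a \<in> S" for a
    using c t setcs by auto
  have c0: "c 0 = 0" and ct: "c t = 1" using c t by auto
  have cmono: "a < a' \<Longrightarrow> a' \<le> t \<Longrightarrow> c a < c a'" for a a'
  proof -
    assume aa: "a < a'" "a' \<le> t"
    show "c a < c a'"
    proof (cases "a = 0")
      case True
      then show ?thesis using aa c0 ct cmid[of a'] S01 by (cases "a' = t") auto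
    next
      case False
      then have ca: "c a \<in> S" "c a = cs ! (a-1)" using cmid[of a] aa c by auto
      show ?thesis
      proof (cases "a' = t")
        case True then show ?thesis using ca S01 ct by auto
      next
        case False
        then have "c a' = cs ! (a'-1)" using c aa by auto
        moreover have "cs ! (a-1) < cs ! (a'-1)"
          using sortcs aa False t \<open>a \<noteq> 0\<close> by (intro sorted_wrt_nth_less[OF sortcs]) auto
        ultimately show ?thesis using ca by simp
      qed
    qed
  qed
  have cmono_iff: "a \<le> t \<Longrightarrow> a' \<le> t \<Longrightarrow> c a < c a' \<longleftrightarrow> a < a'" for a a'
    using cmono by (metis less_asym linorder_neqE_nat)
  have Dc: "\<exists>a0\<le>t. D i = c a0" if "i < p" for i
  proof (cases "D i = 0")
    case True then show ?thesis using c0 by auto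
  next
    case False
    show ?thesis
    proof (cases "D i = 1")
      case True then show ?thesis using ct by auto
    next
      case False
      have "D i \<in> S" unfolding S_def using \<open>D i \<noteq> 0\<close> False rng[OF that] that
        by (intro CollectI exI[of _ "Suc i"]) auto
      then obtain j where j: "j < length cs" "cs ! j = D i" using setcs by (metis in_set_conv_nth)
      then have "c (Suc j) = D i" using c t by auto
      then show ?thesis using j t by (intro exI[of _ "Suc j"]) auto
    qed
  qed
  have tele: "(\<Sum>a=1..t. if D i < c a then c a - c (a-1) else 0) = 1 - D i" if ip: "i < p" for i
  proof -
    obtain a0 where a0: "a0 \<le> t" "D i = c a0" using Dc[OF ip] by blast
    have "(\<Sum>a=1..t. if D i < c a then c a - c (a-1) else 0) = (\<Sum>a=1..t. if a0 < a then c a - c (a-1) else 0)"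
      using a0 cmono_iff by (intro sum.cong) auto
    also have "\<dots> = c t - c a0" by (rule tel[OF a0(1)])
    finally show ?thesis using a0 ct by simp
  qed
  have mq: "m a \<le> p \<and> {i. i < p \<and> D i < c a} = {..<m a}" for a
  proof -
    have "\<exists>q\<le>p. {i. i < p \<and> D i < c a} = {..<q}" by (rule downclosed) (rule srt)
    then obtain q where q: "q \<le> p" "{i. i < p \<and> D i < c a} = {..<q}" by metis
    have "{b \<in> {1..p}. D (b-1) < c a} = Suc ` {i. i < p \<and> D i < c a}"
    proof (rule set_eqI)
      fix x show "x \<in> {b \<in> {1..p}. D (b-1) < c a} \<longleftrightarrow> x \<in> Suc ` {i. i < p \<and> D i < c a}"
        by (cases x) auto
    qed
    then have "m a = card {i. i < p \<and> D i < c a}" using m by (simp add: card_image)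
    then show ?thesis using q by simp
  qed
  have Vm: "V (m a) = V 0 + (\<Sum>i<p. if D i < c a then V (Suc i) - V i else 0)" for a
  proof -
    have "(\<Sum>i<p. if D i < c a then V (Suc i) - V i else 0) = (\<Sum>i\<in>{i. i < p \<and> D i < c a}. V (Suc i) - V i)"
      by (simp add: sum.If_cases Collect_conj_eq lessThan_def Int_commute)
    also have "\<dots> = (\<Sum>i<m a. V (Suc i) - V i)" using mq by simp
    also have "\<dots> = V (m a) - V 0" by (rule sum_lessThan_telescope)
    finally show ?thesis by simp
  qed
  have "(\<Sum>a=1..t. (c a - c (a-1)) *\<^sub>R V (m a))
     = (\<Sum>a=1..t. (c a - c (a-1)) *\<^sub>R V 0) + (\<Sum>a=1..t. \<Sum>i<p. (if D i < c a then c a - c (a-1) else 0) *\<^sub>R (V (Suc i) - V i))"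
  proof -
    have "(c a - c (a-1)) *\<^sub>R V (m a) = (c a - c (a-1)) *\<^sub>R V 0 + (\<Sum>i<p. (if D i < c a then c a - c (a-1) else 0) *\<^sub>R (V (Suc i) - V i))" for a
    proof -
      have "(c a - c (a-1)) *\<^sub>R V (m a) = (c a - c (a-1)) *\<^sub>R V 0 + (\<Sum>i<p. (c a - c (a-1)) *\<^sub>R (if D i < c a then V (Suc i) - V i else 0))"
        unfolding Vm by (simp add: scaleR_add_right scaleR_sum_right)
      also have "(\<Sum>i<p. (c a - c (a-1)) *\<^sub>R (if D i < c a then V (Suc i) - V i else 0)) = (\<Sum>i<p. (if D i < c a then c a - c (a-1) else 0) *\<^sub>R (V (Suc i) - V i))"
        by (intro sum.cong) auto
      finally show ?thesis .
    qed
    then show ?thesis by (simp add: sum.distrib)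
  qed
  also have "(\<Sum>a=1..t. (c a - c (a-1)) *\<^sub>R V 0) = (\<Sum>a=1..t. (c a - c (a-1))) *\<^sub>R V 0"
    by (simp add: scaleR_sum_left)
  also have "(\<Sum>a=1..t. (c a - c (a-1))) = c t - c 0"
    using tel[of 0 t c] by simp
  also have "(\<Sum>a=1..t. \<Sum>i<p. (if D i < c a then c a - c (a-1) else 0) *\<^sub>R (V (Suc i) - V i))
     = (\<Sum>i<p. (\<Sum>a=1..t. if D i < c a then c a - c (a-1) else 0) *\<^sub>R (V (Suc i) - V i))"
    by (subst sum.swap) (simp add: scaleR_sum_left)
  also have "\<dots> = (\<Sum>i<p. (1 - D i) *\<^sub>R (V (Suc i) - V i))"
    using tele by (intro sum.cong) auto
  finally have R: "(\<Sum>a=1..t. (c a - c (a-1)) *\<^sub>R V (m a)) = V 0 + (\<Sum>i<p. (1 - D i) *\<^sub>R (V (Suc i) - V i))"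
    using c0 ct by simp
  have "V p = V 0 + (\<Sum>i<p. V (Suc i) - V i)" by (simp add: sum_lessThan_telescope)
  then have "V p + (\<Sum>i<p. D i *\<^sub>R (V i - V (Suc i))) = V 0 + ((\<Sum>i<p. V (Suc i) - V i) - (\<Sum>i<p. D i *\<^sub>R (V (Suc i) - V i)))"
  proof -
    have neg: "(\<Sum>i<p. D i *\<^sub>R (V i - V (Suc i))) = - (\<Sum>i<p. D i *\<^sub>R (V (Suc i) - V i))"
      by (subst sum_negf[symmetric]) (simp add: algebra_simps)
    assume "V p = V 0 + (\<Sum>i<p. V (Suc i) - V i)"
    then show ?thesis unfolding neg by simp
  qed
  also have "\<dots> = V 0 + (\<Sum>i<p. (1 - D i) *\<^sub>R (V (Suc i) - V i))"
    by (simp add: sum_subtractf[symmetric] scaleR_diff_left)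
  finally show ?thesis unfolding R .
qed



lemma sorted_unique_ex:
  fixes r :: "'b \<Rightarrow> 'b \<Rightarrow> bool"
  assumes fin: "finite S" and irr: "\<And>x. x \<in> S \<Longrightarrow> \<not> r x x"
    and trn: "\<And>x y z. x \<in> S \<Longrightarrow> y \<in> S \<Longrightarrow> z \<in> S \<Longrightarrow> r x y \<Longrightarrow> r y z \<Longrightarrow> r x z"
    and tot: "\<And>x y. x \<in> S \<Longrightarrow> y \<in> S \<Longrightarrow> x \<noteq> y \<Longrightarrow> r x y \<or> r y x"
  shows "\<exists>!L. distinct L \<and> set L = S \<and> sorted_wrt r L"
proof -
  define rk where "rk x = card {z \<in> S. r z x}" for x
  have rk_less: "rk x < rk y" if "x \<in> S" "y \<in> S" "r x y" for x y
  proof -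
    have "{z \<in> S. r z x} \<subset> {z \<in> S. r z y}"
      using that trn irr by blast
    then show ?thesis unfolding rk_def using fin by (intro psubset_card_mono) auto
  qed
  have rk_iff: "r x y \<longleftrightarrow> rk x < rk y" if "x \<in> S" "y \<in> S" for x y
    using rk_less tot that by (metis less_asym less_irrefl)
  have inj: "inj_on rk S"
    using rk_less tot by (metis inj_onI less_irrefl)
  have srt: "sorted_wrt r L \<longleftrightarrow> sorted_wrt (<) (map rk L)" if "set L = S" for L
    unfolding sorted_wrt_map
  proof
    assume "sorted_wrt r L" then show "sorted_wrt (\<lambda>x y. rk x < rk y) L"
      by (rule sorted_wrt_mono_rel[rotated]) (use that rk_iff in auto)
  next
    assume "sorted_wrt (\<lambda>x y. rk x < rk y) L" then show "sorted_wrt r L"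
      by (rule sorted_wrt_mono_rel[rotated]) (use that rk_iff in auto)
  qed
  obtain xs where xs: "set xs = S" "distinct xs" using finite_distinct_list[OF fin] by blast
  define L where "L = sort_key rk xs"
  have L: "set L = S" "distinct L" using xs by (auto simp: L_def)
  have "sorted_wrt (<) (map rk L)"
  proof -
    have "sorted (map rk L)" unfolding L_def by simp
    moreover have "distinct (map rk L)" using L inj by (simp add: distinct_map)
    ultimately show ?thesis by (simp add: strict_sorted_iff)
  qed
  then have ex: "distinct L \<and> set L = S \<and> sorted_wrt r L" using L srt by auto
  show ?thesis
  proof (rule ex1I[of _ L])
    show "distinct L \<and> set L = S \<and> sorted_wrt r L" by (rule ex)
  next
    fix M assume M: "distinct M \<and> set M = S \<and> sorted_wrt r M"
    have "map rk M = map rk L"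
      using M ex srt by (intro strict_sorted_equal) auto
    then show "M = L" using inj M L by (intro map_inj_on[of rk]) auto
  qed
qed



lemma Inv_props:
  assumes "(\<gamma>, k) \<in> Inv \<Delta> \<Delta>p \<mu>"
  shows "\<gamma> \<in> \<Delta> \<and> coroot_pair \<mu> \<gamma> > 0 \<and> 0 \<le> k \<and> of_int k \<le> coroot_pair \<mu> \<gamma>"
  using assms unfolding Inv_def aff_pos_def
  by (auto simp: not_less)

lemma Inv_dval:
  assumes "b \<in> Inv \<Delta> \<Delta>p \<mu>"
  shows "0 \<le> dval \<mu> b \<and> dval \<mu> b \<le> 1"
proof -
  obtain \<gamma> k where b: "b = (\<gamma>, k)" by force
  have "\<gamma> \<in> \<Delta> \<and> coroot_pair \<mu> \<gamma> > 0 \<and> 0 \<le> k \<and> of_int k \<le> coroot_pair \<mu> \<gamma>"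
    using Inv_props[of \<gamma> k] assms b by auto
  then show ?thesis using b unfolding dval_def
    by (auto simp: divide_le_eq_1)
qed

lemma finite_Inv:
  assumes "finite \<Delta>"
  shows "finite (Inv \<Delta> \<Delta>p \<mu>)"
proof -
  have "Inv \<Delta> \<Delta>p \<mu> \<subseteq> Sigma \<Delta> (\<lambda>\<gamma>. {0..\<lfloor>coroot_pair \<mu> \<gamma>\<rfloor>})"
    using Inv_props by (force simp: le_floor_iff)
  then show ?thesis using assms by (rule finite_subset[OF _ finite_SigmaI]) auto
qed

lemma neg_root:
  assumes rs: "root_system \<Delta>" and ps: "positive_system \<Delta> \<Delta>p" and g: "\<gamma> \<in> \<Delta>" "\<gamma> \<notin> \<Delta>p"
  shows "-\<gamma> \<in> \<Delta>p"
proof -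
  have "0 \<notin> \<Delta>" "\<forall>\<alpha>\<in>\<Delta>. refl \<alpha> ` \<Delta> \<subseteq> \<Delta>" using rs unfolding root_system_def by auto
  then have "refl \<gamma> \<gamma> \<in> \<Delta>" using g by auto
  moreover have "refl \<gamma> \<gamma> = -\<gamma>" using g \<open>0 \<notin> \<Delta>\<close> unfolding refl_def coroot_pair_def
    by (auto simp: algebra_simps) (metis scaleR_2 inner_eq_zero_iff)
  ultimately have "-\<gamma> \<in> \<Delta>" by simp
  obtain f where f: "\<forall>\<alpha>\<in>\<Delta>. inner f \<alpha> \<noteq> 0" "\<Delta>p = {\<alpha>\<in>\<Delta>. inner f \<alpha> > 0}"
    using ps unfolding positive_system_def by blast
  then have "inner f \<gamma> < 0" using g by force
  then show ?thesis using f \<open>-\<gamma> \<in> \<Delta>\<close> by simp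
qed

lemma pos_sub: "positive_system \<Delta> \<Delta>p \<Longrightarrow> \<Delta>p \<subseteq> \<Delta>"
  unfolding positive_system_def by auto



locale setting =
  fixes \<Delta> \<Delta>p :: "'a::euclidean_space set" and R :: "'a \<Rightarrow> 'a \<Rightarrow> bool" and \<mu> :: 'a
  assumes rs: "root_system \<Delta>" and ps: "positive_system \<Delta> \<Delta>p" and ro: "R \<in> RO \<mu> \<Delta>p"
begin

lemma irrR: "\<alpha> \<in> \<Delta>p \<Longrightarrow> \<not> R \<alpha> \<alpha>"
  using ro unfolding RO_def reflection_order_def by auto
lemma trR: "\<alpha> \<in> \<Delta>p \<Longrightarrow> \<beta> \<in> \<Delta>p \<Longrightarrow> \<gamma> \<in> \<Delta>p \<Longrightarrow> R \<alpha> \<beta> \<Longrightarrow> R \<beta> \<gamma> \<Longrightarrow> R \<alpha> \<gamma>"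
  using ro unfolding RO_def reflection_order_def by blast
lemma totR: "\<alpha> \<in> \<Delta>p \<Longrightarrow> \<beta> \<in> \<Delta>p \<Longrightarrow> \<alpha> \<noteq> \<beta> \<Longrightarrow> R \<alpha> \<beta> \<or> R \<beta> \<alpha>"
  using ro unfolding RO_def reflection_order_def by blast
lemma negr: "x \<in> \<Delta> \<Longrightarrow> x \<notin> \<Delta>p \<Longrightarrow> -x \<in> \<Delta>p"
  using neg_root[OF rs ps] by blast

lemma prec_irr: "x \<in> \<Delta> \<Longrightarrow> \<not> prec \<Delta>p R x x"
  unfolding prec_def using irrR negr by blast

lemma prec_trans: "x \<in> \<Delta> \<Longrightarrow> y \<in> \<Delta> \<Longrightarrow> z \<in> \<Delta> \<Longrightarrow> prec \<Delta>p R x y \<Longrightarrow> prec \<Delta>p R y z \<Longrightarrow> prec \<Delta>p R x z"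
  unfolding prec_def using trR negr by blast

lemma prec_tot: "x \<in> \<Delta> \<Longrightarrow> y \<in> \<Delta> \<Longrightarrow> x \<noteq> y \<Longrightarrow> prec \<Delta>p R x y \<or> prec \<Delta>p R y x"
  unfolding prec_def using totR negr by (metis minus_equation_iff)

lemma inv_list_props:
  "distinct (inv_list \<Delta> \<Delta>p R \<mu>) \<and> set (inv_list \<Delta> \<Delta>p R \<mu>) = Inv \<Delta> \<Delta>p \<mu>
    \<and> sorted_wrt (inv_less \<Delta>p R \<mu>) (inv_list \<Delta> \<Delta>p R \<mu>)"
  unfolding inv_list_def
proof (rule theI', rule sorted_unique_ex)
  show "finite (Inv \<Delta> \<Delta>p \<mu>)" using rs by (intro finite_Inv) (simp add: root_system_def)
next
  fix x assume "x \<in> Inv \<Delta> \<Delta>p \<mu>"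
  then show "\<not> inv_less \<Delta>p R \<mu> x x"
    unfolding inv_less_def using prec_irr Inv_props[of "fst x" "snd x"] by auto
next
  fix x y z assume xyz: "x \<in> Inv \<Delta> \<Delta>p \<mu>" "y \<in> Inv \<Delta> \<Delta>p \<mu>" "z \<in> Inv \<Delta> \<Delta>p \<mu>"
    and "inv_less \<Delta>p R \<mu> x y" "inv_less \<Delta>p R \<mu> y z"
  moreover have "fst x \<in> \<Delta>" "fst y \<in> \<Delta>" "fst z \<in> \<Delta>"
    using xyz Inv_props[of "fst x" "snd x"] Inv_props[of "fst y" "snd y"] Inv_props[of "fst z" "snd z"] by auto
  ultimately show "inv_less \<Delta>p R \<mu> x z"
    unfolding inv_less_def using prec_trans by (metis less_trans order.strict_trans2 order.strict_trans1)
next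
  fix x y assume xy: "x \<in> Inv \<Delta> \<Delta>p \<mu>" "y \<in> Inv \<Delta> \<Delta>p \<mu>" "x \<noteq> y"
  have px: "fst x \<in> \<Delta>" "coroot_pair \<mu> (fst x) > 0" using xy Inv_props[of "fst x" "snd x"] by auto
  have py: "fst y \<in> \<Delta>" "coroot_pair \<mu> (fst y) > 0" using xy Inv_props[of "fst y" "snd y"] by auto
  show "inv_less \<Delta>p R \<mu> x y \<or> inv_less \<Delta>p R \<mu> y x"
  proof (cases "dval \<mu> x = dval \<mu> y")
    case True
    have "fst x \<noteq> fst y"
    proof
      assume e: "fst x = fst y"
      then have "of_int (snd x) = (of_int (snd y) :: real)"
        using True px unfolding dval_def by (simp add: divide_cancel_right)
      then have "snd x = snd y" by simp
      then show False using e xy by (simp add: prod_eq_iff)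
    qed
    then show ?thesis using prec_tot[OF px(1) py(1)] True unfolding inv_less_def by auto
  next
    case False then show ?thesis unfolding inv_less_def by auto
  qed
qed

end


lemma wt_path_shape:
  fixes U :: "nat \<Rightarrow> 'a::real_vector \<Rightarrow> 'a"
  shows "wt_path \<mu> (map (\<lambda>i. U (t+1-i)) [1..<t+1], ys, map (\<lambda>i. 1 - c (t-i)) [0..<t+1])
       = (\<Sum>a=1..t. (c a - c (a-1)) *\<^sub>R U a \<mu>)"
proof -
  have "wt_path \<mu> (map (\<lambda>i. U (t+1-i)) [1..<t+1], ys, map (\<lambda>i. 1 - c (t-i)) [0..<t+1])
      = (\<Sum>k=1..t. (c (t+1-k) - c (t+1-k-1)) *\<^sub>R U (t+1-k) \<mu>)"
    unfolding wt_path_def prod.case length_map length_upt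
    by (intro sum.cong) (auto simp: Suc_diff_le nth_map_upt simp del: upt_Suc)
  also have "\<dots> = (\<Sum>a=1..t. (c a - c (a-1)) *\<^sub>R U a \<mu>)"
    by (rule sum.reindex_bij_witness[where i="\<lambda>a. t+1-a" and j="\<lambda>a. t+1-a"]) auto
  finally show ?thesis .
qed



theorem proposition5p10:
  fixes \<Delta> \<Delta>p :: "'a::euclidean_space set"
    and \<mu> :: 'a and R :: "'a \<Rightarrow> 'a \<Rightarrow> bool" and w :: "'a \<Rightarrow> 'a" and A :: "nat set"
  assumes "root_system \<Delta>" and "irreducible_rs \<Delta>" and "positive_system \<Delta> \<Delta>p"
    and "\<mu> \<in> weight_lattice \<Delta>"
    and "R \<in> RO \<mu> \<Delta>p"
    and "w \<in> weyl_group \<Delta>"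
    and "A \<in> admissible \<Delta> \<Delta>p R \<mu> w"
  shows "wt_adm \<Delta> \<Delta>p R \<mu> w A = wt_path \<mu> (Xi \<Delta> \<Delta>p R \<mu> w A)"
proof -
  interpret setting \<Delta> \<Delta>p R \<mu> using assms by unfold_locales auto
  define L where "L = inv_list \<Delta> \<Delta>p R \<mu>"
  define js where "js = sorted_list_of_set A"
  define p where "p = length js"
  define g where "g = (\<lambda>j. fst (L ! (j - 1)))"
  define k where "k = (\<lambda>j. - snd (L ! (j - 1)))"
  define D where "D = (\<lambda>i. dval \<mu> (L ! (js ! i - 1)))"
  define V where "V = (\<lambda>q. u_seq \<Delta>p L w js q \<mu>)"
  have Lp: "distinct L" "set L = Inv \<Delta> \<Delta>p \<mu>" "sorted_wrt (inv_less \<Delta>p R \<mu>) L"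
    using inv_list_props unfolding L_def by auto
  have Asub: "A \<subseteq> {1..length L}" using assms(7) unfolding admissible_def Let_def L_def by auto
  have finA: "finite A" using Asub finite_subset by blast
  have jss: "sorted_wrt (<) js" "set js = A" using finA js_def by auto
  have jsr: "1 \<le> js!i \<and> js!i \<le> length L" if "i < p" for i
    using Asub jss(2) nth_mem[of i js] that p_def by auto
  have inInv: "L ! (js!i - 1) \<in> Inv \<Delta> \<Delta>p \<mu>" if "i < p" for i
  proof -
    have "js!i - 1 < length L" using jsr[OF that] by arith
    then show ?thesis using nth_mem Lp(2) by blast
  qed
  have Dsrt: "D i \<le> D j" if "i \<le> j" "j < p" for i j
  proof (cases "i = j")
    case False
    then have "js!i < js!j" using that jss(1) p_def by (intro sorted_wrt_nth_less[OF jss(1)]) auto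
    moreover have "1 \<le> js!i" using jsr[of i] that by simp
    ultimately have "js!i - 1 < js!j - 1" by arith
    then have "inv_less \<Delta>p R \<mu> (L ! (js!i - 1)) (L ! (js!j - 1))"
      using jsr[OF that(2)] by (intro sorted_wrt_nth_less[OF Lp(3)]) auto
    then show ?thesis unfolding D_def inv_less_def by auto
  qed simp
  have Drng: "0 \<le> D i \<and> D i \<le> 1" if "i < p" for i
    unfolding D_def using Inv_dval[OF inInv[OF that]] .
  have wlin: "linear w" using weyl_linear assms(6) by blast
  interpret wl: linear w by (rule wlin)
  have useq: "u_seq \<Delta>p L w js q = (\<lambda>x. w (rprod g (take q js) x))" for q
    unfolding u_seq_def rprod_def g_def by (simp add: absr_refl fun_eq_iff)
  have lhs: "wt_adm \<Delta> \<Delta>p R \<mu> w A = V p + (\<Sum>i<p. D i *\<^sub>R (V i - V (Suc i)))"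
  proof -
    have "wt_adm \<Delta> \<Delta>p R \<mu> w A = - w (aprod g k js (-\<mu>))"
      unfolding wt_adm_def Let_def aprod_def g_def k_def L_def js_def by simp
    also have "\<dots> = - w (rprod g js (-\<mu>) + (\<Sum>i<p. of_int (k (js!i)) *\<^sub>R rprod g (take i js) (g (js!i))))"
      unfolding aff_expand p_def ..
    also have "\<dots> = w (rprod g js \<mu>) + (\<Sum>i<p. of_int (snd (L ! (js!i - 1))) *\<^sub>R w (rprod g (take i js) (g (js!i))))"
    proof -
      interpret rl: linear "rprod g js" by (rule rprod_linear)
      define S where "S = (\<Sum>i<p. of_int (snd (L ! (js!i - 1))) *\<^sub>R rprod g (take i js) (g (js!i)))"
      have e1: "rprod g js (-\<mu>) = - rprod g js \<mu>" by (rule rl.neg)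
      have e2: "(\<Sum>i<p. of_int (k (js!i)) *\<^sub>R rprod g (take i js) (g (js!i))) = - S"
        unfolding S_def k_def by (simp add: sum_negf[symmetric])
      have e3: "w S = (\<Sum>i<p. of_int (snd (L ! (js!i - 1))) *\<^sub>R w (rprod g (take i js) (g (js!i))))"
        unfolding S_def by (simp add: wl.sum wl.scale)
      have "- rprod g js \<mu> + - S = - (rprod g js \<mu> + S)" by simp
      then show ?thesis unfolding e1 e2 e3[symmetric] by (simp only: wl.neg wl.add minus_minus)
    qed
    also have "\<dots> = V p + (\<Sum>i<p. D i *\<^sub>R (V i - V (Suc i)))"
    proof -
      have "w (rprod g js \<mu>) = V p" unfolding V_def useq p_def by simp
      moreover have "of_int (snd (L ! (js!i - 1))) *\<^sub>R w (rprod g (take i js) (g (js!i))) = D i *\<^sub>R (V i - V (Suc i))"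
        if ip: "i < p" for i
      proof -
        interpret rl: linear "rprod g (take i js)" by (rule rprod_linear)
        define X where "X = w (rprod g (take i js) (g (js!i)))"
        define cp where "cp = coroot_pair \<mu> (g (js!i))"
        have cp: "cp > 0" using Inv_props[of "g (js!i)" "snd (L ! (js!i - 1))"] inInv[OF ip]
          unfolding cp_def g_def by auto
        have "V (Suc i) = w (rprod g (take i js) (refl (g (js!i)) \<mu>))"
          unfolding V_def useq using ip p_def by (simp add: take_Suc_conv_app_nth rprod_append)
        also have "\<dots> = V i - cp *\<^sub>R X"
          unfolding refl_def V_def useq X_def cp_def by (simp add: rl.diff rl.scale wl.diff wl.scale)
        finally have "V i - V (Suc i) = cp *\<^sub>R X" by simp
        moreover have "D i = of_int (snd (L ! (js!i - 1))) / cp"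
          unfolding D_def dval_def cp_def g_def ..
        ultimately show ?thesis using cp unfolding X_def by simp
      qed
      ultimately show ?thesis by simp
    qed
    finally show ?thesis .
  qed
  define cs where "cs = sorted_list_of_set {D (b-1) | b. b \<in> {1..p} \<and> 0 < D (b-1) \<and> D (b-1) < 1}"
  define t where "t = length cs + 1"
  define c where "c = (\<lambda>a. if a = 0 then 0 else if a = t then 1 else cs ! (a - 1))"
  define m where "m = (\<lambda>a. card {b \<in> {1..p}. D (b-1) < c a})"
  define U where "U = (\<lambda>a. u_seq \<Delta>p L w js (m a))"
  have comb': "V p + (\<Sum>i<p. D i *\<^sub>R (V i - V (Suc i))) = (\<Sum>a=1..t. (c a - c (a-1)) *\<^sub>R V (m a))"
    by (rule comb[OF Dsrt Drng cs_def t_def c_def m_def])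
  have x1: "fst (Xi \<Delta> \<Delta>p R \<mu> w A) = map (\<lambda>i. U (t+1-i)) [1..<t+1]"
    unfolding Xi_def Let_def U_def m_def c_def t_def cs_def D_def L_def js_def p_def fst_conv snd_conv by (rule refl)
  have x3: "snd (snd (Xi \<Delta> \<Delta>p R \<mu> w A)) = map (\<lambda>i. 1 - c (t-i)) [0..<t+1]"
    unfolding Xi_def Let_def U_def m_def c_def t_def cs_def D_def L_def js_def p_def fst_conv snd_conv by (rule refl)
  have "wt_path \<mu> (Xi \<Delta> \<Delta>p R \<mu> w A) = wt_path \<mu> (map (\<lambda>i. U (t+1-i)) [1..<t+1], fst (snd (Xi \<Delta> \<Delta>p R \<mu> w A)), map (\<lambda>i. 1 - c (t-i)) [0..<t+1])"
    using x1 x3 by (metis prod.collapse)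
  also have "\<dots> = (\<Sum>a=1..t. (c a - c (a-1)) *\<^sub>R U a \<mu>)" by (rule wt_path_shape)
  also have "\<dots> = (\<Sum>a=1..t. (c a - c (a-1)) *\<^sub>R V (m a))" unfolding U_def V_def ..
  finally show ?thesis using lhs comb' by simp
qed


end
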